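(* Let $q$ be a prime integer different from $p$. For every $0\le k\le r$, the ideal $\mathcal S^k(q)=[(q),(q),\dots,(q)]$ (with $(q)=qR_j$ in each $R_j$, $0\le j\le k$) is a prime ideal of $\Omega_{H_k}$.
   Context: Fix a prime $p$ and an integer $r\ge0$. For $0\le k\le r$ let $R_k$ be the commutative ring which is free as a $\mathbb{Z}$-module with basis $X_{k,0},\dots,X_{k,k}$ and multiplication $X_{k,i}X_{k,j}=p^{k-\max(i,j)}X_{k,\min(i,j)}$; thus $X_{k,k}=1$, and an integer $n$ is identified with $nX_{k,k}$. For $0\le k\le\ell\le r$ define: the additive map $\mathrm{ind}^\ell_k:R_k\to R_\ell$, $X_{k,i}\mapsto X_{\ell,i}$; the ring homomorphism $\mathrm{res}^\ell_k:R_\ell\to R_k$, $\mathrm{res}^\ell_k(X_{\ell,i})=p^{\ell-k}X_{k,i}$ if $i\le k$ and $=p^{\ell-i}$ if $i\ge k$; and the multiplicative map $\mathrm{jnd}^\ell_k:R_k\to R_\ell$, $$\mathrm{jnd}^\ell_k\Big(\sum_{i=0}^k m_iX_{k,i}\Big)=m_kX_{\ell,\ell}+\sum_{k\le i<\ell}\frac{m_k^{p^{\ell-i}}-m_k^{p^{\ell-i-1}}}{p^{\ell-i}}X_{\ell,i}+\sum_{0\le i<k}\frac{(\sum_{s=i}^k m_sp^{k-s})^{p^{\ell-k}}-(\sum_{s=i+1}^k m_sp^{k-s})^{p^{\ell-k}}}{p^{\ell-i}}X_{\ell,i}$$ ($m_i\in\mathbb{Z}$). For $k=\ell$ these maps are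 the identity. These data form the Burnside Tambara functor on $\mathbb{Z}/p^r\mathbb{Z}$; keeping indices $\le n$ gives $\Omega_{H_n}$. An ideal of $\Omega_{H_n}$ is a sequence $[I_0,\dots,I_n]$ of ideals $I_k\subseteq R_k$ such that for every $1\le k\le n$: $\mathrm{ind}^k_{k-1}(I_{k-1})\subseteq I_k$, $\mathrm{res}^k_{k-1}(I_k)\subseteq I_{k-1}$, $\mathrm{jnd}^k_{k-1}(I_{k-1})\subseteq I_k$. It is proper if $I_0\ne R_0$. A proper ideal is prime if for all $0\le\ell\le k\le n$, $a\in R_k$, $b\in R_\ell$: whenever $(\mathrm{jnd}^m_i\mathrm{res}^k_i(a))\cdot(\mathrm{jnd}^m_j\mathrm{res}^\ell_j(b))\in I_m$ for all $0\le i\le k$, $0\le j\le\ell$, $m=\max(i,j)$, then $a\in I_k$ or $b\in I_\ell$. *)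

theory Defs
  imports "HOL-Computational_Algebra.Primes"
begin

text \<open>Elements of R_k are represented by their coefficient functions
  m :: nat => int, where m i is the coefficient of X_{k,i}; they are
  required to vanish for i > k.\<close>

definition Rcarrier :: "nat \<Rightarrow> (nat \<Rightarrow> int) set" where
  "Rcarrier k = {m. \<forall>i. k < i \<longrightarrow> m i = 0}"

definition Radd :: "nat \<Rightarrow> (nat \<Rightarrow> int) \<Rightarrow> (nat \<Rightarrow> int) \<Rightarrow> (nat \<Rightarrow> int)" where
  "Radd k a b = (\<lambda>t. if t \<le> k then a t + b t else 0)"

text \<open>X_{k,i} X_{k,j} = p^(k - max i j) X_{k, min i j}, extended bilinearly.\<close>
definition Rmult :: "nat \<Rightarrow> nat \<Rightarrow> (nat \<Rightarrow> int) \<Rightarrow> (nat \<Rightarrow> int) \<Rightarrow> (nat \<Rightarrow> int)" where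
  "Rmult p k a b = (\<lambda>t. if t \<le> k then
      (\<Sum>i\<le>k. \<Sum>j\<le>k. if min i j = t then a i * b j * int p ^ (k - max i j) else 0)
    else 0)"

definition ind :: "nat \<Rightarrow> nat \<Rightarrow> (nat \<Rightarrow> int) \<Rightarrow> (nat \<Rightarrow> int)" where
  "ind l k a = (\<lambda>t. if t \<le> k then a t else 0)"

text \<open>res^l_k : X_{l,i} |-> p^(l-k) X_{k,i} (i <= k), p^(l-i) X_{k,k} (i >= k)\<close>
definition res :: "nat \<Rightarrow> nat \<Rightarrow> nat \<Rightarrow> (nat \<Rightarrow> int) \<Rightarrow> (nat \<Rightarrow> int)" where
  "res p l k a = (\<lambda>t. if t < k then int p ^ (l - k) * a t
      else if t = k then (\<Sum>i\<in>{k..l}. int p ^ (l - i) * a i)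
      else 0)"

text \<open>jnd^l_k (the norm map); the divisions are exact integer divisions.\<close>
definition jnd :: "nat \<Rightarrow> nat \<Rightarrow> nat \<Rightarrow> (nat \<Rightarrow> int) \<Rightarrow> (nat \<Rightarrow> int)" where
  "jnd p l k a = (\<lambda>t.
      if t = l then a k
      else if k \<le> t \<and> t < l then
        (a k ^ (p ^ (l - t)) - a k ^ (p ^ (l - t - 1))) div (int p ^ (l - t))
      else if t < k then
        ((\<Sum>s\<in>{t..k}. a s * int p ^ (k - s)) ^ (p ^ (l - k))
          - (\<Sum>s\<in>{t+1..k}. a s * int p ^ (k - s)) ^ (p ^ (l - k))) div (int p ^ (l - t))
      else 0)"

definition R_ideal :: "nat \<Rightarrow> nat \<Rightarrow> (nat \<Rightarrow> int) set \<Rightarrow> bool" where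
  "R_ideal p k I \<longleftrightarrow> I \<subseteq> Rcarrier k \<and> I \<noteq> {} \<and>
     (\<forall>a\<in>I. \<forall>b\<in>I. Radd k a b \<in> I) \<and>
     (\<forall>a\<in>I. \<forall>x\<in>Rcarrier k. Rmult p k x a \<in> I)"

definition Tambara_ideal :: "nat \<Rightarrow> nat \<Rightarrow> (nat \<Rightarrow> (nat \<Rightarrow> int) set) \<Rightarrow> bool" where
  "Tambara_ideal p n I \<longleftrightarrow>
     (\<forall>k\<le>n. R_ideal p k (I k)) \<and>
     (\<forall>k. 1 \<le> k \<and> k \<le> n \<longrightarrow>
        ind k (k - 1) ` I (k - 1) \<subseteq> I k \<and>
        res p k (k - 1) ` I k \<subseteq> I (k - 1) \<and>
        jnd p k (k - 1) ` I (k - 1) \<subseteq> I k)"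

definition Tambara_proper :: "nat \<Rightarrow> nat \<Rightarrow> (nat \<Rightarrow> (nat \<Rightarrow> int) set) \<Rightarrow> bool" where
  "Tambara_proper p n I \<longleftrightarrow> Tambara_ideal p n I \<and> I 0 \<noteq> Rcarrier 0"

definition Tambara_prime :: "nat \<Rightarrow> nat \<Rightarrow> (nat \<Rightarrow> (nat \<Rightarrow> int) set) \<Rightarrow> bool" where
  "Tambara_prime p n I \<longleftrightarrow> Tambara_proper p n I \<and>
     (\<forall>l k a b. l \<le> k \<and> k \<le> n \<and> a \<in> Rcarrier k \<and> b \<in> Rcarrier l \<longrightarrow>
        (\<forall>i\<le>k. \<forall>j\<le>l.
           Rmult p (max i j) (jnd p (max i j) i (res p k i a)) (jnd p (max i j) j (res p l j b))
             \<in> I (max i j))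
        \<longrightarrow> a \<in> I k \<or> b \<in> I l)"

definition principal_int :: "nat \<Rightarrow> nat \<Rightarrow> (nat \<Rightarrow> int) set" where
  "principal_int q j = {(\<lambda>t. int q * a t) | a. a \<in> Rcarrier j}"

definition S_ideal :: "nat \<Rightarrow> nat \<Rightarrow> (nat \<Rightarrow> int) set" where
  "S_ideal q = (\<lambda>j. principal_int q j)"

end

theory Submission
  imports Defs "HOL-Number_Theory.Number_Theory"
begin

lemma fermat_int:
  fixes x :: int and p :: nat
  assumes "prime p"
  shows "int p dvd x ^ p - x"
proof -
  have p0: "p > 0" using assms prime_gt_0_nat by blast
  define y where "y = nat (x mod int p)"
  have xy: "[x = int y] (mod int p)"
    using p0 by (simp add: y_def cong_def)
  have yy: "[y ^ p = y] (mod p)"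
  proof (cases "p dvd y")
    case True
    then have "[y = 0] (mod p)" by (simp add: cong_0_iff)
    moreover have "[y ^ p = 0] (mod p)" proof -
      have "y ^ p = y * y ^ (p - 1)" using p0 by (metis Suc_diff_1 power_Suc)
      then show ?thesis using True by (simp add: cong_0_iff)
    qed
    ultimately show ?thesis by (metis cong_sym cong_trans)
  next
    case False
    then have "[y ^ (p - 1) = 1] (mod p)" using fermat_theorem assms by blast
    then have "[y * y ^ (p - 1) = y * 1] (mod p)" by (rule cong_scalar_left)
    moreover have "y * y ^ (p - 1) = y ^ p" using p0 by (metis Suc_diff_1 power_Suc)
    ultimately show ?thesis by simp
  qed
  then have "[int y ^ p = int y] (mod int p)"
    by (metis cong_int_iff of_nat_power)
  moreover have "[x ^ p = int y ^ p] (mod int p)" using xy by (rule cong_pow)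
  ultimately have "[x ^ p = x] (mod int p)"
    by (meson cong_sym cong_trans xy)
  then show ?thesis by (simp add: cong_iff_dvd_diff)
qed

lemma lte1:
  fixes x y :: int and p :: nat
  assumes "p > 0" "int p ^ e dvd x - y" "int p dvd x - y"
  shows "int p ^ Suc e dvd x ^ p - y ^ p"
proof -
  have eq: "x^p - y^p = (x - y) * (\<Sum>i<p. y^(p - Suc i) * x^i)" by (rule power_diff_sumr2)
  have xy: "[x = y] (mod int p)" using assms(3) by (simp add: cong_iff_dvd_diff)
  have "[(\<Sum>i<p. y^(p - Suc i) * x^i) = (\<Sum>i<p. y^(p - Suc i) * y^i)] (mod int p)"
    by (intro cong_sum cong_mult cong_refl cong_pow xy)
  moreover have "(\<Sum>i<p. y^(p - Suc i) * y^i) = (\<Sum>i<p. y^(p - 1))"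
  proof (intro sum.cong refl)
    fix i assume "i \<in> {..<p}"
    then have "p - Suc i + i = p - 1" by auto
    then show "y^(p - Suc i) * y^i = y^(p - 1)" by (metis power_add)
  qed
  moreover have "(\<Sum>i<p. y^(p - 1)) = int p * y^(p-1)" by simp
  ultimately have "int p dvd (\<Sum>i<p. y^(p - Suc i) * x^i)"
    by (metis cong_dvd_iff dvd_triv_left)
  then have "int p ^ e * int p dvd (x - y) * (\<Sum>i<p. y^(p - Suc i) * x^i)"
    by (rule mult_dvd_mono[OF assms(2)])
  then show ?thesis using eq by (simp add: mult.commute)
qed


lemma PI_iff:
  assumes "q > 0"
  shows "z \<in> principal_int q j \<longleftrightarrow> z \<in> Rcarrier j \<and> (\<forall>t. int q dvd z t)"
proof
  assume "z \<in> principal_int q j"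
  then obtain a where a: "a \<in> Rcarrier j" "z = (\<lambda>t. int q * a t)"
    unfolding principal_int_def by blast
  then show "z \<in> Rcarrier j \<and> (\<forall>t. int q dvd z t)"
    by (auto simp: Rcarrier_def)
next
  assume h: "z \<in> Rcarrier j \<and> (\<forall>t. int q dvd z t)"
  define a where "a = (\<lambda>t. z t div int q)"
  have "z = (\<lambda>t. int q * a t)" using h by (auto simp: a_def)
  moreover have "a \<in> Rcarrier j" using h by (auto simp: a_def Rcarrier_def)
  ultimately show "z \<in> principal_int q j" unfolding principal_int_def by blast
qed

lemma Rmult_top: "Rmult p m x y m = x m * y m"
proof -
  have inner: "(\<Sum>j\<le>m. if min i j = m then x i * y j * int p ^ (m - max i j) else 0)
      = (if i = m then x m * y m else 0)" if "i \<le> m" for i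
  proof (cases "i = m")
    case True
    have "(\<Sum>j\<le>m. if min i j = m then x i * y j * int p ^ (m - max i j) else 0)
        = (\<Sum>j\<le>m. if j = m then x m * y m else 0)"
      using True by (intro sum.cong refl) auto
    then show ?thesis using True by simp
  next
    case False
    then have "i < m" using that by simp
    then have "(\<Sum>j\<le>m. if min i j = m then x i * y j * int p ^ (m - max i j) else 0) = 0"
      by (intro sum.neutral ballI) simp
    then show ?thesis using False by simp
  qed
  have "(\<Sum>i\<le>m. \<Sum>j\<le>m. if min i j = m then x i * y j * int p ^ (m - max i j) else 0)
      = (\<Sum>i\<le>m. if i = m then x m * y m else 0)"
    using inner by (intro sum.cong refl) simp
  also have "\<dots> = x m * y m" by simp
  finally show ?thesis by (simp add: Rmult_def)
qed

lemma jnd_top: "jnd p m i z m = z i"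
  by (simp add: jnd_def)

lemma res_top: "res p k i a i = (\<Sum>s\<in>{i..k}. int p ^ (k - s) * a s)"
  by (simp add: res_def)

lemma key:
  fixes a :: "nat \<Rightarrow> int"
  assumes "a \<in> Rcarrier k" "coprime (int q) (int p)"
    "\<forall>i\<le>k. int q dvd (\<Sum>s\<in>{i..k}. int p ^ (k - s) * a s)"
  shows "\<forall>t. int q dvd a t"
proof -
  have "\<forall>s\<in>{0..k}. int q dvd a s"
  proof (rule inc_induct[of 0 k])
    show "0 \<le> k" by simp
    show "\<forall>s\<in>{k..k}. int q dvd a s" using assms(3)[rule_format, of k] by simp
  next
    fix n assume n: "0 \<le> n" "n < k" and IH: "\<forall>s\<in>{Suc n..k}. int q dvd a s"
    have "(\<Sum>s\<in>{n..k}. int p ^ (k - s) * a s) = int p ^ (k - n) * a n + (\<Sum>s\<in>{Suc n..k}. int p ^ (k - s) * a s)"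
      using n by (simp add: sum.atLeast_Suc_atMost)
    moreover have "int q dvd (\<Sum>s\<in>{Suc n..k}. int p ^ (k - s) * a s)"
      using IH by (intro dvd_sum) simp
    moreover have "int q dvd (\<Sum>s\<in>{n..k}. int p ^ (k - s) * a s)" using assms(3) n by simp
    ultimately have "int q dvd int p ^ (k - n) * a n" by (simp add: dvd_add_left_iff)
    moreover have "coprime (int q) (int p ^ (k - n))" using assms(2) by simp
    ultimately have an: "int q dvd a n" using coprime_dvd_mult_right_iff by blast
    show "\<forall>s\<in>{n..k}. int q dvd a s"
    proof
      fix s assume "s \<in> {n..k}"
      then have "s = n \<or> s \<in> {Suc n..k}" by auto
      then show "int q dvd a s" using IH an by auto
    qed
  qed
  moreover have "\<forall>t. k < t \<longrightarrow> a t = 0" using assms(1) by (simp add: Rcarrier_def)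
  ultimately show ?thesis
  proof -
    assume A: "\<forall>s\<in>{0..k}. int q dvd a s" and B: "\<forall>t. k < t \<longrightarrow> a t = 0"
    show ?thesis
    proof
      fix t show "int q dvd a t"
      proof (cases "t \<le> k")
        case True then show ?thesis using A by simp
      next
        case False then show ?thesis using B by simp
      qed
    qed
  qed
qed

lemma div_dvd_coprime:
  fixes N P Q :: int
  assumes "P dvd N" "Q dvd N" "coprime Q P" "P \<noteq> 0"
  shows "Q dvd N div P"
proof -
  obtain M where M: "N = P * M" using assms(1) by blast
  then have "N div P = M" using assms(4) by simp
  moreover have "Q dvd P * M" using assms(2) M by simp
  ultimately show ?thesis using assms(3) coprime_dvd_mult_right_iff by metis
qed


lemma S_iff:
  assumes "q > 0"
  shows "z \<in> S_ideal q j \<longleftrightarrow> z \<in> Rcarrier j \<and> (\<forall>t. int q dvd z t)"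
  unfolding S_ideal_def using PI_iff[OF assms] by blast

lemma R_ideal_S:
  assumes "q > 0"
  shows "R_ideal p j (S_ideal q j)"
  unfolding R_ideal_def
proof (intro conjI ballI)
  show "S_ideal q j \<subseteq> Rcarrier j" using S_iff[OF assms] by blast
  have "(\<lambda>t. 0) \<in> S_ideal q j" using S_iff[OF assms] by (simp add: Rcarrier_def)
  then show "S_ideal q j \<noteq> {}" by blast
next
  fix a b assume "a \<in> S_ideal q j" "b \<in> S_ideal q j"
  then show "Radd j a b \<in> S_ideal q j"
    using S_iff[OF assms] by (auto simp: Radd_def Rcarrier_def)
next
  fix a x assume a: "a \<in> S_ideal q j" and x: "x \<in> Rcarrier j"
  have da: "\<forall>t. int q dvd a t" using a S_iff[OF assms] by blast
  have "\<forall>t. int q dvd Rmult p j x a t"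
  proof
    fix t
    show "int q dvd Rmult p j x a t"
      unfolding Rmult_def using da by (auto intro!: dvd_sum)
  qed
  moreover have "Rmult p j x a \<in> Rcarrier j" by (simp add: Rmult_def Rcarrier_def)
  ultimately show "Rmult p j x a \<in> S_ideal q j" using S_iff[OF assms] by blast
qed

lemma jnd_S:
  assumes "prime p" "prime q" "coprime (int q) (int p)"
    and z: "z \<in> S_ideal q K"
  shows "jnd p (Suc K) K z \<in> S_ideal q (Suc K)"
proof -
  have q0: "q > 0" using assms(2) prime_gt_0_nat by blast
  have p0: "p > 0" using assms(1) prime_gt_0_nat by blast
  have dz: "\<forall>t. int q dvd z t" using z S_iff[OF q0] by blast
  have qpow: "\<And>x. int q dvd x \<Longrightarrow> int q dvd x ^ p"
    using p0 by (metis Suc_diff_1 dvd_mult2 power_Suc)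
  have car: "jnd p (Suc K) K z \<in> Rcarrier (Suc K)"
    by (simp add: jnd_def Rcarrier_def)
  have "\<forall>t. int q dvd jnd p (Suc K) K z t"
  proof
    fix t
    consider "t = Suc K" | "t = K" | "t < K" | "t > Suc K" by linarith
    then show "int q dvd jnd p (Suc K) K z t"
    proof cases
      case 1 then show ?thesis using dz by (simp add: jnd_def)
    next
      case 2
      have v: "jnd p (Suc K) K z t = (z K ^ p - z K) div int p"
        using 2 by (simp add: jnd_def)
      show ?thesis unfolding v
        by (rule div_dvd_coprime) (use fermat_int[OF assms(1)] dz qpow assms(3) p0 in auto)
    next
      case 3
      define A where "A = (\<Sum>s\<in>{t..K}. z s * int p ^ (K - s))"
      define B where "B = (\<Sum>s\<in>{t+1..K}. z s * int p ^ (K - s))"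
      have v: "jnd p (Suc K) K z t = (A ^ p - B ^ p) div int p ^ (Suc K - t)"
        using 3 by (simp add: jnd_def A_def B_def)
      have AB: "A - B = z t * int p ^ (K - t)"
        using 3 by (simp add: A_def B_def sum.atLeast_Suc_atMost)
      have e: "Suc K - t = Suc (K - t)" using 3 by simp
      have d1: "int p ^ (K - t) dvd A - B" unfolding AB by simp
      have d2: "int p dvd A - B" unfolding AB using 3
        by (metis dvd_mult dvd_power zero_less_diff)
      have dA: "int q dvd A" unfolding A_def using dz by (intro dvd_sum) simp
      have dB: "int q dvd B" unfolding B_def using dz by (intro dvd_sum) simp
      show ?thesis unfolding v e
        by (rule div_dvd_coprime) (use lte1[OF p0 d1 d2] dA dB qpow assms(3) p0 in auto)
    next
      case 4 then show ?thesis by (simp add: jnd_def)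
    qed
  qed
  then show ?thesis using car S_iff[OF q0] by blast
qed

lemma ideal_S:
  assumes "prime p" "prime q" "coprime (int q) (int p)"
  shows "Tambara_ideal p n (S_ideal q)"
  unfolding Tambara_ideal_def
proof (intro conjI allI impI)
  have q0: "q > 0" using assms(2) prime_gt_0_nat by blast
  fix k' assume "k' \<le> n"
  show "R_ideal p k' (S_ideal q k')" by (rule R_ideal_S[OF q0])
next
  have q0: "q > 0" using assms(2) prime_gt_0_nat by blast
  fix k' assume k': "1 \<le> k' \<and> k' \<le> n"
  define K where "K = k' - 1"
  have K: "k' = Suc K" using k' by (simp add: K_def)
  show "ind k' (k' - 1) ` S_ideal q (k' - 1) \<subseteq> S_ideal q k'"
    using S_iff[OF q0] K by (auto simp: ind_def Rcarrier_def)
  show "res p k' (k' - 1) ` S_ideal q k' \<subseteq> S_ideal q (k' - 1)"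
  proof
    fix w assume "w \<in> res p k' (k' - 1) ` S_ideal q k'"
    then obtain z where z: "z \<in> S_ideal q k'" and w: "w = res p k' (k' - 1) z" by blast
    have dz: "\<forall>t. int q dvd z t" using z S_iff[OF q0] by blast
    have "\<forall>t. int q dvd w t" unfolding w res_def using dz by (auto intro!: dvd_sum)
    moreover have "w \<in> Rcarrier (k' - 1)" unfolding w by (simp add: res_def Rcarrier_def)
    ultimately show "w \<in> S_ideal q (k' - 1)" using S_iff[OF q0] by blast
  qed
  show "jnd p k' (k' - 1) ` S_ideal q (k' - 1) \<subseteq> S_ideal q k'"
    using jnd_S[OF assms] K by auto
qed

theorem proposition6:
  fixes p q r k :: nat
  assumes "prime p" and "prime q" and "q \<noteq> p" and "k \<le> r"
  shows "Tambara_prime p k (S_ideal q)"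
proof -
  have q0: "q > 0" using assms(2) prime_gt_0_nat by blast
  have p0: "p > 0" using assms(1) prime_gt_0_nat by blast
  have cop: "coprime (int q) (int p)"
    using assms(1,2,3) primes_coprime by (metis coprime_int_iff)
  have qint: "prime (int q)" using assms(2) by simp
  have I: "\<And>j z. z \<in> S_ideal q j \<longleftrightarrow> z \<in> Rcarrier j \<and> (\<forall>t. int q dvd z t)"
    unfolding S_ideal_def using PI_iff[OF q0] by blast
  have ideal: "Tambara_ideal p k (S_ideal q)"
    using ideal_S assms(1,2) cop by blast
  have proper: "S_ideal q 0 \<noteq> Rcarrier 0"
  proof
    assume h: "S_ideal q 0 = Rcarrier 0"
    have "(\<lambda>t::nat. if t = 0 then (1::int) else 0) \<in> Rcarrier 0" by (simp add: Rcarrier_def)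
    then have "\<forall>t. int q dvd (\<lambda>t::nat. if t = 0 then (1::int) else 0) t"
      using h I[of "(\<lambda>t::nat. if t = 0 then (1::int) else 0)" 0] by blast
    then have "int q dvd (if (0::nat) = 0 then (1::int) else 0)" by blast
    then have "int q dvd 1" by simp
    then show False using assms(2) by simp
  qed
  show ?thesis
    unfolding Tambara_prime_def Tambara_proper_def
  proof (intro conjI ideal proper allI impI)
    fix l k' a b
    assume h1: "l \<le> k' \<and> k' \<le> k \<and> a \<in> Rcarrier k' \<and> b \<in> Rcarrier l"
    assume h2: "\<forall>i\<le>k'. \<forall>j\<le>l.
           Rmult p (max i j) (jnd p (max i j) i (res p k' i a)) (jnd p (max i j) j (res p l j b))
             \<in> S_ideal q (max i j)"
    show "a \<in> S_ideal q k' \<or> b \<in> S_ideal q l"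
    proof (rule ccontr)
      assume "\<not> (a \<in> S_ideal q k' \<or> b \<in> S_ideal q l)"
      then have na: "\<not> (\<forall>t. int q dvd a t)" and nb: "\<not> (\<forall>t. int q dvd b t)"
        using h1 I by auto
      have "\<not> (\<forall>i\<le>k'. int q dvd (\<Sum>s\<in>{i..k'}. int p ^ (k' - s) * a s))"
        using key[of a k' q p] h1 cop na by blast
      then obtain i where i: "i \<le> k'" "\<not> int q dvd res p k' i a i"
        by (auto simp only: res_top)
      have "\<not> (\<forall>j\<le>l. int q dvd (\<Sum>s\<in>{j..l}. int p ^ (l - s) * b s))"
        using key[of b l q p] h1 cop nb by blast
      then obtain j where j: "j \<le> l" "\<not> int q dvd res p l j b j"
        by (auto simp only: res_top)
      let ?m = "max i j"
      have "int q dvd Rmult p ?m (jnd p ?m i (res p k' i a)) (jnd p ?m j (res p l j b)) ?m"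
        using h2 i(1) j(1) I by blast
      then have "int q dvd res p k' i a i * res p l j b j"
        by (simp only: Rmult_top jnd_top)
      then show False using i j qint prime_dvd_mult_iff by blast
    qed
  qed
qed

end
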